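(* Let $(C,S)$ be a right-angled Coxeter system and $\rho\colon C\to\mathrm{SL}^{\pm}(|S|,\mathbb{R})$ a simplicial representation with fully nondegenerate Cartan matrix. For $T\subset S$ let $V_T=\mathrm{span}\{v_s:s\in T\}$ and $V_T^\perp=\bigcap_{s\in T}\ker(\alpha_s)$. Then $V=V_T\oplus V_T^\perp$ is a $C(T)$-invariant decomposition, and the representation $\rho_T\colon C(T)\to\mathrm{SL}^{\pm}(V_T)$ given by the restriction of $\rho|_{C(T)}$ to $V_T$ is isomorphic to a simplicial representation of $(C(T),T)$.
   Context: $S=\{s_1,\dots,s_n\}$, $V=\mathbb{R}^n$, $C(T)=\langle T\rangle$. A Cartan matrix is a real $n\times n$ matrix $A$ with $A_{ii}=2$; $A_{ij}=0$ if $s_i,s_j$ commute ($i\ne j$); $A_{ij}<0$ and $A_{ij}A_{ji}\ge4$ otherwise. With $\alpha_{s_i}=e^i$ (dual basis) and $v_{s_i}=\sum_kA_{ki}e_k$, the simplicial representation is $\rho(s_i)=\mathrm{id}-v_{s_i}\otimes\alpha_{s_i}$. A simplicial representation of $(C(T),T)$ is defined in the same way from a Cartan matrix of $(C(T),T)$. $A$ is fully nondegenerate if all its principal minors are nonzero. *)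

theory Defs
  imports "HOL-Analysis.Analysis"
begin

text \<open>Generators s_i are indexed by the finite type 'n (so n = CARD('n)); V = real^'n,
  alpha_{s_i}(x) = x$i.  A right-angled Coxeter system is given by a symmetric relation
  comm: for i \<noteq> j, s_i and s_j commute iff comm i j (otherwise m_ij = infinity).\<close>

definition right_angled :: "('n \<Rightarrow> 'n \<Rightarrow> bool) \<Rightarrow> bool" where
  "right_angled comm \<longleftrightarrow> (\<forall>i j. comm i j = comm j i)"

definition cartan_on :: "('n \<Rightarrow> 'n \<Rightarrow> bool) \<Rightarrow> 'n set \<Rightarrow> real^'n^'n \<Rightarrow> bool" where
  "cartan_on comm T A \<longleftrightarrow>
     (\<forall>i\<in>T. A$i$i = 2) \<and>
     (\<forall>i\<in>T. \<forall>j\<in>T. i \<noteq> j \<longrightarrow>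
        (comm i j \<longrightarrow> A$i$j = 0) \<and>
        (\<not> comm i j \<longrightarrow> A$i$j < 0 \<and> A$i$j * A$j$i \<ge> 4))"

definition principal_minor :: "real^'n^'n \<Rightarrow> 'n set \<Rightarrow> real" where
  "principal_minor A I =
     (\<Sum>p\<in>{p. p permutes I}. of_int (sign p) * (\<Prod>i\<in>I. A$i$(p i)))"

definition fully_nondegenerate :: "real^'n^'n \<Rightarrow> bool" where
  "fully_nondegenerate A \<longleftrightarrow> (\<forall>I. I \<noteq> {} \<longrightarrow> principal_minor A I \<noteq> 0)"

definition vvec :: "real^'n^'n \<Rightarrow> 'n \<Rightarrow> real^'n" where
  "vvec A i = (\<chi> k. A$k$i)"

definition rho :: "real^'n^'n \<Rightarrow> 'n \<Rightarrow> real^'n \<Rightarrow> real^'n" where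
  "rho A i x = x - (x$i) *\<^sub>R vvec A i"

definition word_act :: "real^'n^'n \<Rightarrow> 'n list \<Rightarrow> real^'n \<Rightarrow> real^'n" where
  "word_act A ws = foldr (\<lambda>i f. rho A i \<circ> f) ws id"

text \<open>R^T is modelled as the subspace of real^'n of vectors supported on T;
  the simplicial representation of (C(T),T) with Cartan matrix B (entries on T\<times>T).\<close>
definition coordT :: "'n set \<Rightarrow> (real^'n) set" where
  "coordT T = {y. \<forall>k. k \<notin> T \<longrightarrow> y$k = 0}"

definition vvecT :: "'n set \<Rightarrow> real^'n^'n \<Rightarrow> 'n \<Rightarrow> real^'n" where
  "vvecT T B i = (\<chi> k. if k \<in> T then B$k$i else 0)"

definition rhoT :: "'n set \<Rightarrow> real^'n^'n \<Rightarrow> 'n \<Rightarrow> real^'n \<Rightarrow> real^'n" where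
  "rhoT T B i y = y - (y$i) *\<^sub>R vvecT T B i"

definition word_actT :: "'n set \<Rightarrow> real^'n^'n \<Rightarrow> 'n list \<Rightarrow> real^'n \<Rightarrow> real^'n" where
  "word_actT T B ws = foldr (\<lambda>i f. rhoT T B i \<circ> f) ws id"

definition V_T :: "real^'n^'n \<Rightarrow> 'n set \<Rightarrow> (real^'n) set" where
  "V_T A T = span (vvec A ` T)"

definition V_T_perp :: "'n set \<Rightarrow> (real^'n) set" where
  "V_T_perp T = {x. \<forall>i\<in>T. x$i = 0}"

end

theory Submission
  imports Defs
begin

definition Mt :: "real^'n^'n \<Rightarrow> 'n set \<Rightarrow> real^'n^'n" where
  "Mt A T = (\<chi> i j. if i \<in> T then (if j \<in> T then A$i$j else 0) else (if i = j then 1 else 0))"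

lemma det_Mt:
  fixes A :: "real^'n::finite^'n"
  shows "det (Mt A T) = principal_minor A T"
proof -
  have z: "(\<Prod>i\<in>UNIV. Mt A T $ i $ p i) = 0" if "p \<in> {p. p permutes UNIV} - {p. p permutes T}" for p
  proof -
    from that have "\<exists>x. x \<notin> T \<and> p x \<noteq> x" unfolding permutes_def by auto
    then obtain x where "x \<notin> T" "p x \<noteq> x" by blast
    hence "Mt A T $ x $ p x = 0" by (simp add: Mt_def)
    thus ?thesis by (meson UNIV_I finite prod_zero)
  qed
  have e: "(\<Prod>i\<in>UNIV. Mt A T $ i $ p i) = (\<Prod>i\<in>T. A $ i $ p i)" if "p permutes T" for p
  proof -
    have "(\<Prod>i\<in>UNIV. Mt A T $ i $ p i) = (\<Prod>i\<in>T. Mt A T $ i $ p i)"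
      by (rule prod.mono_neutral_right) (use that in \<open>auto simp: Mt_def permutes_not_in\<close>)
    also have "\<dots> = (\<Prod>i\<in>T. A $ i $ p i)"
      by (rule prod.cong) (use that in \<open>auto simp: Mt_def permutes_in_image\<close>)
    finally show ?thesis .
  qed
  have sub: "{p. p permutes T} \<subseteq> {p. p permutes (UNIV::'n set)}"
    using permutes_subset by blast
  have "det (Mt A T) = (\<Sum>p\<in>{p. p permutes T}. of_int (sign p) * (\<Prod>i\<in>UNIV. Mt A T $ i $ p i))"
    unfolding det_def
  proof (rule sum.mono_neutral_right)
    show "finite {p. p permutes (UNIV::'n set)}" by (simp add: finite_permutations)
    show "{p. p permutes T} \<subseteq> {p. p permutes (UNIV::'n set)}" by (rule sub)
    show "\<forall>i\<in>{p. p permutes UNIV} - {p. p permutes T}.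
      of_int (sign i) * (\<Prod>ia\<in>UNIV. Mt A T $ ia $ i ia) = 0" using z by simp
  qed
  also have "\<dots> = principal_minor A T"
    unfolding principal_minor_def by (rule sum.cong) (auto simp: e)
  finally show ?thesis .
qed

lemma pm_empty: "principal_minor A {} = 1"
  unfolding principal_minor_def by (simp add: permutes_empty sign_id)

lemma Mt_mult_in:
  fixes A :: "real^'n::finite^'n"
  assumes "i \<in> T" shows "(Mt A T *v c) $ i = (\<Sum>j\<in>T. A$i$j * c$j)"
proof -
  have "(Mt A T *v c) $ i = (\<Sum>j\<in>UNIV. if j \<in> T then A$i$j * c$j else 0)"
    unfolding matrix_vector_mult_def vec_lambda_beta using assms by (intro sum.cong refl) (simp add: Mt_def)
  also have "\<dots> = (\<Sum>j\<in>T. A$i$j * c$j)" by (simp add: sum.If_cases)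
  finally show ?thesis .
qed

lemma Mt_mult_out:
  fixes A :: "real^'n::finite^'n"
  assumes "i \<notin> T" shows "(Mt A T *v c) $ i = c $ i"
proof -
  have "(Mt A T *v c) $ i = (\<Sum>j\<in>UNIV. if i = j then c$j else 0)"
    unfolding matrix_vector_mult_def vec_lambda_beta using assms by (intro sum.cong refl) (simp add: Mt_def)
  also have "\<dots> = c $ i" by simp
  finally show ?thesis .
qed

lemma l1:
  fixes f :: "'a \<Rightarrow> 'b::real_vector"
  shows "(\<Sum>j\<in>T. c j *\<^sub>R f j) \<in> span (f ` T)"
  by (rule span_sum) (intro span_mul span_base imageI)

lemma l2:
  fixes f :: "'a \<Rightarrow> 'b::real_vector"
  shows "subspace (range (\<lambda>c. \<Sum>j\<in>T. c j *\<^sub>R f j))"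
  unfolding subspace_def
proof (intro conjI ballI allI)
  show "0 \<in> range (\<lambda>c. \<Sum>j\<in>T. c j *\<^sub>R f j)"
    by (rule range_eqI[of _ _ "\<lambda>_. 0"]) simp
next
  fix x y assume "x \<in> range (\<lambda>c. \<Sum>j\<in>T. c j *\<^sub>R f j)" "y \<in> range (\<lambda>c. \<Sum>j\<in>T. c j *\<^sub>R f j)"
  then obtain a b where "x = (\<Sum>j\<in>T. a j *\<^sub>R f j)" "y = (\<Sum>j\<in>T. b j *\<^sub>R f j)" by blast
  hence "x + y = (\<Sum>j\<in>T. (a j + b j) *\<^sub>R f j)" by (simp add: sum.distrib scaleR_add_left)
  thus "x + y \<in> range (\<lambda>c. \<Sum>j\<in>T. c j *\<^sub>R f j)" by (simp only:) (rule rangeI)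
next
  fix r x assume "x \<in> range (\<lambda>c. \<Sum>j\<in>T. c j *\<^sub>R f j)"
  then obtain a where "x = (\<Sum>j\<in>T. a j *\<^sub>R f j)" by blast
  hence "r *\<^sub>R x = (\<Sum>j\<in>T. (r * a j) *\<^sub>R f j)" by (simp add: scaleR_sum_right)
  thus "r *\<^sub>R x \<in> range (\<lambda>c. \<Sum>j\<in>T. c j *\<^sub>R f j)" by (simp only:) (rule rangeI)
qed
lemma l3:
  fixes f :: "'a \<Rightarrow> 'b::real_vector"
  assumes "finite T"
  shows "f ` T \<subseteq> range (\<lambda>c. \<Sum>j\<in>T. c j *\<^sub>R f j)"
proof
  fix y assume "y \<in> f ` T"
  then obtain k where k: "k \<in> T" "y = f k" by blast
  have "(\<Sum>j\<in>T. (if j = k then 1 else 0) *\<^sub>R f j) = (\<Sum>j\<in>T. if j = k then f j else 0)"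
    by (intro sum.cong refl) simp
  also have "\<dots> = f k" using k assms by (simp add: sum.delta)
  finally have "y = (\<Sum>j\<in>T. (if j = k then 1 else 0) *\<^sub>R f j)" using k by simp
  thus "y \<in> range (\<lambda>c. \<Sum>j\<in>T. c j *\<^sub>R f j)" by (simp only:) (rule rangeI)
qed

lemma span_image_eq:
  fixes f :: "'a \<Rightarrow> 'b::real_vector"
  assumes "finite T"
  shows "span (f ` T) = range (\<lambda>c. \<Sum>j\<in>T. c j *\<^sub>R f j)"
proof
  show "range (\<lambda>c. \<Sum>j\<in>T. c j *\<^sub>R f j) \<subseteq> span (f ` T)" using l1 by blast
  show "span (f ` T) \<subseteq> range (\<lambda>c. \<Sum>j\<in>T. c j *\<^sub>R f j)"
    by (rule span_minimal[OF l3[OF assms] l2])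
qed

lemma vsum_comp: "(\<Sum>j\<in>T. c j *\<^sub>R vvec A j) $ i = (\<Sum>j\<in>T. A$i$j * c j)"
  by (simp add: vvec_def sum_component mult.commute)

lemma word_act_Cons: "word_act A (i # ws) x = rho A i (word_act A ws x)"
  by (simp add: word_act_def)

lemma word_actT_Cons: "word_actT T B (i # ws) x = rhoT T B i (word_actT T B ws x)"
  by (simp add: word_actT_def)

lemma word_act_Nil: "word_act A [] x = x" by (simp add: word_act_def)
lemma word_actT_Nil: "word_actT T B [] x = x" by (simp add: word_actT_def)

lemma word_act_VT: "set ws \<subseteq> T \<Longrightarrow> x \<in> V_T A T \<Longrightarrow> word_act A ws x \<in> V_T A T"
proof (induction ws)
  case Nil thus ?case by (simp add: word_act_Nil)
next
  case (Cons i ws)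
  hence y: "word_act A ws x \<in> V_T A T" and iT: "i \<in> T" by auto
  have "vvec A i \<in> V_T A T" unfolding V_T_def using iT by (intro span_base) auto
  thus ?case using y unfolding word_act_Cons rho_def V_T_def
    by (intro span_diff span_mul) auto
qed

lemma word_act_perp: "set ws \<subseteq> T \<Longrightarrow> x \<in> V_T_perp T \<Longrightarrow> word_act A ws x \<in> V_T_perp T"
proof (induction ws)
  case Nil thus ?case by (simp add: word_act_Nil)
next
  case (Cons i ws)
  hence y: "word_act A ws x \<in> V_T_perp T" and iT: "i \<in> T" by auto
  hence "word_act A ws x $ i = 0" by (simp add: V_T_perp_def)
  thus ?case using y unfolding word_act_Cons rho_def by simp
qed

definition phiT :: "'n set \<Rightarrow> real^'n \<Rightarrow> real^'n" where
  "phiT T x = (\<chi> k. if k \<in> T then x$k else 0)"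

lemma phiT_rho: "i \<in> T \<Longrightarrow> phiT T (rho A i z) = rhoT T A i (phiT T z)"
  by (simp add: vec_eq_iff phiT_def rho_def rhoT_def vvec_def vvecT_def)

lemma phiT_word: "set ws \<subseteq> T \<Longrightarrow> phiT T (word_act A ws x) = word_actT T A ws (phiT T x)"
  by (induction ws) (auto simp: word_act_Nil word_actT_Nil word_act_Cons word_actT_Cons phiT_rho)

lemma linear_phiT: "linear (phiT T)"
  by (rule linearI) (auto simp: vec_eq_iff phiT_def)

theorem lemma4p8:
  fixes comm :: "'n::finite \<Rightarrow> 'n \<Rightarrow> bool" and A :: "real^'n^'n" and T :: "'n set"
  assumes "right_angled comm"
    and "cartan_on comm UNIV A"
    and "fully_nondegenerate A"
  shows "V_T A T \<inter> V_T_perp T = {0}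
    \<and> (\<forall>x. \<exists>u\<in>V_T A T. \<exists>w\<in>V_T_perp T. x = u + w)
    \<and> (\<forall>ws. set ws \<subseteq> T \<longrightarrow>
          word_act A ws ` V_T A T \<subseteq> V_T A T \<and> word_act A ws ` V_T_perp T \<subseteq> V_T_perp T)
    \<and> (\<exists>B \<phi>. cartan_on comm T B \<and> linear \<phi> \<and> inj_on \<phi> (V_T A T)
          \<and> \<phi> ` V_T A T = coordT T
          \<and> (\<forall>ws. set ws \<subseteq> T \<longrightarrow>
               (\<forall>x\<in>V_T A T. \<phi> (word_act A ws x) = word_actT T B ws (\<phi> x))))"
proof -
  have fin: "finite T" by simp
  have "principal_minor A T \<noteq> 0"
    using assms(3) pm_empty[of A] unfolding fully_nondegenerate_def by (cases "T = {}") auto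
  hence "det (Mt A T) \<noteq> 0" by (simp add: det_Mt)
  hence "invertible (Mt A T)" by (simp add: invertible_det_nz)
  then obtain Bi where Bi: "Mt A T ** Bi = mat 1" "Bi ** Mt A T = mat 1"
    unfolding invertible_def by blast
  have ker: "c = 0" if "Mt A T *v c = 0" for c
  proof -
    have "c = (Bi ** Mt A T) *v c" by (simp add: Bi)
    also have "\<dots> = Bi *v (Mt A T *v c)" by (simp add: matrix_vector_mul_assoc)
    also have "\<dots> = 0" using that by simp
    finally show ?thesis .
  qed
  have sj: "\<exists>c. Mt A T *v c = b" for b
  proof
    have "Mt A T *v (Bi *v b) = (Mt A T ** Bi) *v b" by (simp add: matrix_vector_mul_assoc)
    thus "Mt A T *v (Bi *v b) = b" by (simp add: Bi)
  qed
  have VT: "V_T A T = range (\<lambda>c. \<Sum>j\<in>T. c j *\<^sub>R vvec A j)"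
    unfolding V_T_def by (rule span_image_eq[OF fin])
  have inter: "V_T A T \<inter> V_T_perp T = {0}"
  proof
    show "{0} \<subseteq> V_T A T \<inter> V_T_perp T" by (auto simp: V_T_def V_T_perp_def span_zero)
  next
    show "V_T A T \<inter> V_T_perp T \<subseteq> {0}"
    proof
      fix x assume x: "x \<in> V_T A T \<inter> V_T_perp T"
      then obtain c where xc: "x = (\<Sum>j\<in>T. c j *\<^sub>R vvec A j)" using VT by auto
      define cv where "cv = (\<chi> j. if j \<in> T then c j else 0)"
      have "Mt A T *v cv = 0"
      proof (subst vec_eq_iff, intro allI)
        fix i
        show "(Mt A T *v cv) $ i = 0 $ i"
        proof (cases "i \<in> T")
          case True
          have "(Mt A T *v cv) $ i = (\<Sum>j\<in>T. A$i$j * c j)"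
            using True by (simp add: Mt_mult_in cv_def)
          also have "\<dots> = x $ i" using xc vsum_comp by metis
          also have "\<dots> = 0" using x True by (simp add: V_T_perp_def)
          finally show ?thesis by simp
        next
          case False thus ?thesis by (simp add: Mt_mult_out cv_def)
        qed
      qed
      hence "cv = 0" by (rule ker)
      have "\<forall>j\<in>T. c j = 0"
      proof
        fix j assume "j \<in> T"
        hence "cv $ j = c j" by (simp add: cv_def)
        thus "c j = 0" using \<open>cv = 0\<close> by simp
      qed
      hence "x = 0" using xc by (simp add: sum.neutral)
      thus "x \<in> {0}" by simp
    qed
  qed
  have decomp: "\<exists>u\<in>V_T A T. \<exists>w\<in>V_T_perp T. x = u + w" for x
  proof -
    obtain cv where cv: "Mt A T *v cv = (\<chi> i. if i \<in> T then x$i else 0)" using sj by blast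
    define u where "u = (\<Sum>j\<in>T. cv$j *\<^sub>R vvec A j)"
    have "u \<in> V_T A T" unfolding VT u_def by (rule rangeI)
    moreover have "x - u \<in> V_T_perp T"
    proof -
      have "(x - u) $ i = 0" if "i \<in> T" for i
      proof -
        have "u $ i = (Mt A T *v cv) $ i" unfolding u_def vsum_comp using that by (simp add: Mt_mult_in)
        thus ?thesis using that cv by simp
      qed
      thus ?thesis by (simp add: V_T_perp_def)
    qed
    moreover have "x = u + (x - u)" by simp
    ultimately show ?thesis by blast
  qed
  have cart: "cartan_on comm T A" using assms(2) by (simp add: cartan_on_def)
  have phi0: "phiT T x = 0 \<longleftrightarrow> x \<in> V_T_perp T" for x
    by (auto simp: phiT_def vec_eq_iff V_T_perp_def)
  have inj: "inj_on (phiT T) (V_T A T)"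
  proof (rule inj_onI)
    fix x y assume xy: "x \<in> V_T A T" "y \<in> V_T A T" "phiT T x = phiT T y"
    have "phiT T (x - y) = phiT T x - phiT T y" by (rule linear_diff[OF linear_phiT])
    hence "phiT T (x - y) = 0" using xy(3) by simp
    hence "x - y \<in> V_T_perp T" using phi0[of "x - y"] by simp
    moreover have "x - y \<in> V_T A T" using xy unfolding V_T_def by (intro span_diff)
    ultimately have "x - y \<in> V_T A T \<inter> V_T_perp T" by blast
    hence "x - y = 0" using inter by blast
    thus "x = y" by simp
  qed
  have img: "phiT T ` V_T A T = coordT T"
  proof
    show "phiT T ` V_T A T \<subseteq> coordT T" by (auto simp: phiT_def coordT_def)
  next
    show "coordT T \<subseteq> phiT T ` V_T A T"
    proof
      fix y assume y: "y \<in> coordT T"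
      obtain u w where uw: "u \<in> V_T A T" "w \<in> V_T_perp T" "y = u + w" using decomp by blast
      have "phiT T (u + w) = phiT T u + phiT T w" by (rule linear_add[OF linear_phiT])
      hence e1: "phiT T y = phiT T u + phiT T w" using uw(3) by simp
      have e2: "phiT T w = 0" using phi0[of w] uw(2) by simp
      have e3: "phiT T y = y" using y by (auto simp: phiT_def coordT_def vec_eq_iff)
      have "y = phiT T u" using e1 e2 e3 by simp
      thus "y \<in> phiT T ` V_T A T" using uw(1) by (rule image_eqI)
    qed
  qed
  have inv: "\<forall>ws. set ws \<subseteq> T \<longrightarrow>
          word_act A ws ` V_T A T \<subseteq> V_T A T \<and> word_act A ws ` V_T_perp T \<subseteq> V_T_perp T"
    by (auto intro: word_act_VT word_act_perp)
  have ex: "\<exists>B \<phi>. cartan_on comm T B \<and> linear \<phi> \<and> inj_on \<phi> (V_T A T)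
          \<and> \<phi> ` V_T A T = coordT T
          \<and> (\<forall>ws. set ws \<subseteq> T \<longrightarrow>
               (\<forall>x\<in>V_T A T. \<phi> (word_act A ws x) = word_actT T B ws (\<phi> x)))"
    apply (rule exI[of _ A], rule exI[of _ "phiT T"])
    using cart linear_phiT inj img phiT_word by blast
  show ?thesis
    apply (intro conjI)
       apply (rule inter)
      apply (intro allI, rule decomp)
     apply (rule inv)
    apply (rule ex)
    done
qed

end
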